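(* Let $S\subset\mathbb{Z}_{>0}^3$ be the union, up to permutation of coordinates, of the following sets: (1) the set $\mathcal{A}$ of all well-formed triples $(a,b,c)$ for which $\mathbb{P}(a,b,c)$ contains a Du Val singularity or a smooth torus-invariant point; (2) $\mathcal{B}_1=\{(1+4\ell(n-1),\,2n-1+4k(n-1),\,4n-4): n\geq2,\ 0\leq\ell,k<n-1\}$; (3) $\mathcal{B}_2=\{(1+\ell(6n-5),\,3n-1+k(6n-5),\,6n-5): n\geq2,\ 0\leq\ell,k<\lceil\frac{4(6n-5)}{9}\rceil\}$; (4) $\mathcal{B}_3=\{(1+\ell(6n-7),\,3n-2+k(6n-7),\,6n-7): n\geq2,\ 0\leq\ell,k<\lceil\frac{4(6n-7)}{9}\rceil\}$. Then $S$ has density zero in $\mathbb{Z}_{>0}^3$, i.e. $\lim_{N\to\infty}\#(S\cap[1,N]^3)/N^3=0$.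
   Context: A triple $(a,b,c)$ is well-formed if its entries are pairwise coprime. The torus-invariant points of $\mathbb{P}(a,b,c)$ are the cyclic quotient points $\frac1a(b,c)$, $\frac1b(a,c)$, $\frac1c(a,b)$. *)

theory Defs
  imports Complex_Main
begin

definition well_formed :: "nat \<times> nat \<times> nat \<Rightarrow> bool" where
  "well_formed t = (case t of (a, b, c) \<Rightarrow>
      0 < a \<and> 0 < b \<and> 0 < c \<and> coprime a b \<and> coprime a c \<and> coprime b c)"

text \<open>The cyclic quotient surface point 1/r(a,b) (with r coprime to a and b) is smooth iff r = 1,
  and is a Du Val singularity (necessarily of type A_{r-1}) iff r \<ge> 2 and r divides a + b.\<close>

definition cq_smooth :: "nat \<Rightarrow> nat \<Rightarrow> nat \<Rightarrow> bool" where
  "cq_smooth r a b = (r = 1)"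

definition cq_DuVal :: "nat \<Rightarrow> nat \<Rightarrow> nat \<Rightarrow> bool" where
  "cq_DuVal r a b = (2 \<le> r \<and> r dvd (a + b))"

text \<open>Torus-invariant points of P(a,b,c): 1/a(b,c), 1/b(a,c), 1/c(a,b).\<close>

definition has_DuVal_or_smooth_point :: "nat \<times> nat \<times> nat \<Rightarrow> bool" where
  "has_DuVal_or_smooth_point t = (case t of (a, b, c) \<Rightarrow>
      cq_DuVal a b c \<or> cq_smooth a b c \<or>
      cq_DuVal b a c \<or> cq_smooth b a c \<or>
      cq_DuVal c a b \<or> cq_smooth c a b)"

definition setA :: "(nat \<times> nat \<times> nat) set" where
  "setA = {t. well_formed t \<and> has_DuVal_or_smooth_point t}"

definition setB1 :: "(nat \<times> nat \<times> nat) set" where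
  "setB1 = {(1 + 4 * l * (n - 1), 2 * n - 1 + 4 * k * (n - 1), 4 * n - 4) | n l k.
              2 \<le> n \<and> l < n - 1 \<and> k < n - 1}"

definition setB2 :: "(nat \<times> nat \<times> nat) set" where
  "setB2 = {(1 + l * (6 * n - 5), 3 * n - 1 + k * (6 * n - 5), 6 * n - 5) | n l k.
              2 \<le> n \<and> int l < \<lceil>(4 * (6 * real n - 5)) / 9\<rceil>
                    \<and> int k < \<lceil>(4 * (6 * real n - 5)) / 9\<rceil>}"

definition setB3 :: "(nat \<times> nat \<times> nat) set" where
  "setB3 = {(1 + l * (6 * n - 7), 3 * n - 2 + k * (6 * n - 7), 6 * n - 7) | n l k.
              2 \<le> n \<and> int l < \<lceil>(4 * (6 * real n - 7)) / 9\<rceil>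
                    \<and> int k < \<lceil>(4 * (6 * real n - 7)) / 9\<rceil>}"

definition perm_closure :: "(nat \<times> nat \<times> nat) set \<Rightarrow> (nat \<times> nat \<times> nat) set" where
  "perm_closure T = {(x, y, z). (x, y, z) \<in> T \<or> (x, z, y) \<in> T \<or> (y, x, z) \<in> T
                      \<or> (y, z, x) \<in> T \<or> (z, x, y) \<in> T \<or> (z, y, x) \<in> T}"

definition setS :: "(nat \<times> nat \<times> nat) set" where
  "setS = perm_closure (setA \<union> setB1 \<union> setB2 \<union> setB3)"

end

theory Submission imports Defs "HOL-Real_Asymp.Real_Asymp" begin

lemma hsum_le: "n \<ge> 1 \<Longrightarrow> (\<Sum>z=1..n. 1 / real z) \<le> 1 + ln (real n)"
proof (induction n rule: dec_induct)
  case base then show ?case by simp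
next
  case (step n)
  have "ln (real n / real (Suc n)) \<le> real n / real (Suc n) - 1"
    using step by (intro ln_le_minus_one) auto
  also have "\<dots> = - 1 / real (Suc n)" by (simp add: field_simps)
  finally have "1 / real (Suc n) \<le> ln (real (Suc n)) - ln (real n)"
    using step by (simp add: ln_div)
  then show ?case using step by simp
qed

lemma lim_final: "(\<lambda>N::nat. real N ^ 2 * (27 + 12 * ln (real N)) / real N ^ 3) \<longlonglongrightarrow> 0"
  by real_asymp

lemma count_mod:
  fixes f :: "nat \<Rightarrow> nat \<Rightarrow> nat"
  shows "card {(x,y,z). x\<in>{1..N} \<and> y\<in>{1..N} \<and> z\<in>{1..N} \<and> 2\<le>z \<and> x mod z = f y z}
     \<le> (\<Sum>z\<in>{1..N}. N * (N div z + 1))"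
proof -
  let ?D = "SIGMA z:{1..N}. {1..N} \<times> {0..N div z}"
  let ?g = "\<lambda>(z,y,q). (q*z + f y z, y, z)"
  have sub: "{(x,y,z). x\<in>{1..N} \<and> y\<in>{1..N} \<and> z\<in>{1..N} \<and> 2\<le>z \<and> x mod z = f y z} \<subseteq> ?g ` ?D"
  proof (clarify)
    fix x y z assume h: "x\<in>{1..N}" "y\<in>{1..N}" "z\<in>{1..N}" "2\<le>z" "x mod z = f y z"
    have "x = (x div z) * z + f y z" using h(5) by (metis div_mult_mod_eq)
    moreover have "x div z \<le> N div z" using h(1) by (simp add: div_le_mono)
    ultimately show "(x,y,z) \<in> ?g ` ?D" using h by (intro image_eqI[where x="(z,y,x div z)"]) auto
  qed
  have "card {(x,y,z). x\<in>{1..N} \<and> y\<in>{1..N} \<and> z\<in>{1..N} \<and> 2\<le>z \<and> x mod z = f y z} \<le> card (?g ` ?D)"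
    by (rule card_mono[OF _ sub]) auto
  also have "\<dots> \<le> card ?D" by (rule card_image_le) auto
  also have "\<dots> = (\<Sum>z\<in>{1..N}. N * (N div z + 1))"
    by (subst card_SigmaI) (auto simp: card_cartesian_product)
  finally show ?thesis .
qed

lemma sum_bound: "real (\<Sum>z\<in>{1..N}. N * (N div z + 1)) \<le> real N ^ 2 * (2 + ln (real N))"
proof (cases "N = 0")
  case True then show ?thesis by simp
next
  case False
  have "real (\<Sum>z\<in>{1..N}. N * (N div z + 1)) = (\<Sum>z\<in>{1..N}. real N * (real (N div z) + 1))"
    by (simp add: algebra_simps)
  also have "\<dots> \<le> (\<Sum>z\<in>{1..N}. real N * (real N * (1 / real z) + 1))"
    by (intro sum_mono mult_left_mono) (auto simp: of_nat_div_le_of_nat)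
  also have "\<dots> = real N ^ 2 * (\<Sum>z\<in>{1..N}. 1 / real z) + real N ^ 2"
    by (simp add: sum.distrib sum_distrib_left power2_eq_square algebra_simps)
  also have "\<dots> \<le> real N ^ 2 * (1 + ln (real N)) + real N ^ 2"
    using hsum_le[of N] False by (intro add_mono mult_left_mono) auto
  finally show ?thesis by (simp add: algebra_simps)
qed

lemma dvd_mod1: assumes "2 \<le> (z::nat)" "z dvd x + y" shows "x mod z = (z - y mod z) mod z"
proof -
  have d: "z dvd (x mod z + y mod z)" using assms(2) by (simp add: dvd_eq_mod_eq_0 mod_add_eq)
  have "x mod z < z" "y mod z < z" using assms(1) by auto
  then obtain k where k: "x mod z + y mod z = z * k" "k < 2" using d
    by (metis (no_types, lifting) add_less_mono dvdE mult_2_right mult_less_cancel1 less_nat_zero_code)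
  then consider "k = 0" | "k = 1" by linarith
  then show ?thesis
  proof cases
    case 1 then show ?thesis using k by simp
  next
    case 2 then show ?thesis using k \<open>x mod z < z\<close> by simp
  qed
qed
lemma dvd_mod2: "2 \<le> (z::nat) \<Longrightarrow> 1 \<le> x \<Longrightarrow> z dvd x - 1 \<Longrightarrow> x mod z = 1"
  using less_eq_Suc_le mod_nat_eqI by presburger

definition boxN :: "nat \<Rightarrow> (nat \<times> nat \<times> nat) set" where
  "boxN N = {1..N} \<times> {1..N} \<times> {1..N}"

definition Mset :: "nat \<Rightarrow> (nat \<Rightarrow> nat \<Rightarrow> nat) \<Rightarrow> (nat \<times> nat \<times> nat) set" where
  "Mset N f = {(x,y,z). x\<in>{1..N} \<and> y\<in>{1..N} \<and> z\<in>{1..N} \<and> 2\<le>z \<and> x mod z = f y z}"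

definition fD :: "nat \<Rightarrow> nat \<Rightarrow> nat" where "fD y z = (z - y mod z) mod z"
definition fB :: "nat \<Rightarrow> nat \<Rightarrow> nat" where "fB y z = 1"

definition Qp :: "nat \<times> nat \<times> nat \<Rightarrow> bool" where
  "Qp t = (case t of (a,b,c) \<Rightarrow> a = 1 \<or> b = 1 \<or> c = 1
     \<or> (2 \<le> a \<and> a dvd b + c) \<or> (2 \<le> b \<and> b dvd a + c) \<or> (2 \<le> c \<and> c dvd a + b)
     \<or> (2 \<le> a \<and> a dvd b - 1) \<or> (2 \<le> a \<and> a dvd c - 1)
     \<or> (2 \<le> b \<and> b dvd a - 1) \<or> (2 \<le> b \<and> b dvd c - 1)
     \<or> (2 \<le> c \<and> c dvd a - 1) \<or> (2 \<le> c \<and> c dvd b - 1))"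

definition perms :: "(nat \<times> nat \<times> nat \<Rightarrow> nat \<times> nat \<times> nat) set" where
  "perms = {\<lambda>(x,y,z). (x,y,z), \<lambda>(x,y,z). (x,z,y), \<lambda>(x,y,z). (y,x,z),
            \<lambda>(x,y,z). (y,z,x), \<lambda>(x,y,z). (z,x,y), \<lambda>(x,y,z). (z,y,x)}"

definition Ones :: "nat \<Rightarrow> (nat \<times> nat \<times> nat) set" where
  "Ones N = ({1} \<times> {1..N} \<times> {1..N}) \<union> ({1..N} \<times> {1} \<times> {1..N}) \<union> ({1..N} \<times> {1..N} \<times> {1})"

definition Uset :: "nat \<Rightarrow> (nat \<times> nat \<times> nat) set" where
  "Uset N = Ones N \<union> (\<Union>p\<in>perms. p ` (Mset N fD \<union> Mset N fB))"

lemma QpI: "2 \<le> c \<Longrightarrow> c dvd a - 1 \<Longrightarrow> Qp (a,b,c)"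
  by (simp add: Qp_def)

lemma Qp_swap: "Qp (a,c,b) \<Longrightarrow> Qp (a,b,c)"
  unfolding Qp_def by (simp only: prod.case add.commute) blast

lemma Qp_rot: "Qp (b,c,a) \<Longrightarrow> Qp (a,b,c)"
  unfolding Qp_def by (simp only: prod.case add.commute) blast

lemma T_Q: "t \<in> setA \<union> setB1 \<union> setB2 \<union> setB3 \<Longrightarrow> Qp t"
proof -
  assume "t \<in> setA \<union> setB1 \<union> setB2 \<union> setB3"
  then consider "t \<in> setA" | "t \<in> setB1" | "t \<in> setB2" | "t \<in> setB3" by blast
  then show ?thesis
  proof cases
    case 1
    then obtain a b c where t: "t = (a,b,c)" and h: "has_DuVal_or_smooth_point (a,b,c)"
      unfolding setA_def by (cases t) auto
    from h have "a = 1 \<or> b = 1 \<or> c = 1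
     \<or> (2 \<le> a \<and> a dvd b + c) \<or> (2 \<le> b \<and> b dvd a + c) \<or> (2 \<le> c \<and> c dvd a + b)"
      unfolding has_DuVal_or_smooth_point_def cq_DuVal_def cq_smooth_def by (simp only: prod.case) blast
    then show ?thesis unfolding t Qp_def by (simp only: prod.case) blast
  next
    case 2
    then obtain n l k where t: "t = (1 + 4 * l * (n - 1), 2 * n - 1 + 4 * k * (n - 1), 4 * n - 4)" and n: "2 \<le> n"
      unfolding setB1_def by blast
    have "4 * l * (n - 1) = l * (4 * n - 4)" by (simp add: diff_mult_distrib2)
    then have "(4 * n - 4) dvd (1 + 4 * l * (n - 1)) - 1" by (metis dvd_triv_right diff_add_inverse)
    moreover have "2 \<le> 4 * n - 4" using n by linarith
    ultimately show ?thesis unfolding t by (rule QpI[rotated])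
  next
    case 3
    then obtain n l k where t: "t = (1 + l * (6 * n - 5), 3 * n - 1 + k * (6 * n - 5), 6 * n - 5)" and n: "2 \<le> n"
      unfolding setB2_def by blast
    have "(6 * n - 5) dvd (1 + l * (6 * n - 5)) - 1" by simp
    moreover have "2 \<le> 6 * n - 5" using n by linarith
    ultimately show ?thesis unfolding t by (rule QpI[rotated])
  next
    case 4
    then obtain n l k where t: "t = (1 + l * (6 * n - 7), 3 * n - 2 + k * (6 * n - 7), 6 * n - 7)" and n: "2 \<le> n"
      unfolding setB3_def by blast
    have "(6 * n - 7) dvd (1 + l * (6 * n - 7)) - 1" by simp
    moreover have "2 \<le> 6 * n - 7" using n by linarith
    ultimately show ?thesis unfolding t by (rule QpI[rotated])
  qed
qed

lemma S_Q: "t \<in> setS \<Longrightarrow> Qp t"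
proof -
  assume "t \<in> setS"
  then obtain a b c where t: "t = (a,b,c)" and
    "Qp (a,b,c) \<or> Qp (a,c,b) \<or> Qp (b,a,c) \<or> Qp (b,c,a) \<or> Qp (c,a,b) \<or> Qp (c,b,a)"
    unfolding setS_def perm_closure_def using T_Q by (cases t) blast
  then show ?thesis unfolding t using Qp_swap Qp_rot by metis
qed

lemma Q_U: "t \<in> boxN N \<Longrightarrow> Qp t \<Longrightarrow> t \<in> Uset N"
proof -
  assume "t \<in> boxN N" "Qp t"
  then obtain a b c where t: "t = (a,b,c)" and box: "a \<in> {1..N}" "b \<in> {1..N}" "c \<in> {1..N}"
    and q: "Qp (a,b,c)" unfolding boxN_def by (cases t) auto
  have mD: "\<And>x y z. x \<in> {1..N} \<Longrightarrow> y \<in> {1..N} \<Longrightarrow> z \<in> {1..N} \<Longrightarrow> 2 \<le> z \<Longrightarrow> z dvd x + y \<Longrightarrow> (x,y,z) \<in> Mset N fD"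
    unfolding Mset_def fD_def using dvd_mod1 by auto
  have mB: "\<And>x y z. x \<in> {1..N} \<Longrightarrow> y \<in> {1..N} \<Longrightarrow> z \<in> {1..N} \<Longrightarrow> 2 \<le> z \<Longrightarrow> z dvd x - 1 \<Longrightarrow> (x,y,z) \<in> Mset N fB"
    unfolding Mset_def fB_def using dvd_mod2 by auto
  have img: "\<And>p s. p \<in> perms \<Longrightarrow> s \<in> Mset N fD \<union> Mset N fB \<Longrightarrow> p s \<in> Uset N"
    unfolding Uset_def by blast
  have P1: "(\<lambda>(x,y,z). (x,y,z)) \<in> perms" "(\<lambda>(x,y,z). (x,z,y)) \<in> perms" "(\<lambda>(x,y,z). (y,x,z)) \<in> perms"
     "(\<lambda>(x,y,z). (y,z,x)) \<in> perms" "(\<lambda>(x,y,z). (z,x,y)) \<in> perms" "(\<lambda>(x,y,z). (z,y,x)) \<in> perms"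
    unfolding perms_def by auto
  from q consider "a = 1 \<or> b = 1 \<or> c = 1"
     | "2 \<le> a \<and> a dvd b + c" | "2 \<le> b \<and> b dvd a + c" | "2 \<le> c \<and> c dvd a + b"
     | "2 \<le> a \<and> a dvd b - 1" | "2 \<le> a \<and> a dvd c - 1"
     | "2 \<le> b \<and> b dvd a - 1" | "2 \<le> b \<and> b dvd c - 1"
     | "2 \<le> c \<and> c dvd a - 1" | "2 \<le> c \<and> c dvd b - 1"
    unfolding Qp_def by auto
  then show ?thesis
  proof cases
    case 1 then show ?thesis using box t by (auto simp: Uset_def Ones_def)
  next
    case 2 then have "(b,c,a) \<in> Mset N fD" using mD box by auto
    from img[OF P1(5) UnI1[OF this]] show ?thesis using t by simp
  next
    case 3 then have "(a,c,b) \<in> Mset N fD" using mD box by auto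
    from img[OF P1(2) UnI1[OF this]] show ?thesis using t by simp
  next
    case 4 then have "(a,b,c) \<in> Mset N fD" using mD box by auto
    from img[OF P1(1) UnI1[OF this]] show ?thesis using t by simp
  next
    case 5 then have "(b,c,a) \<in> Mset N fB" using mB box by auto
    from img[OF P1(5) UnI2[OF this]] show ?thesis using t by simp
  next
    case 6 then have "(c,b,a) \<in> Mset N fB" using mB box by auto
    from img[OF P1(6) UnI2[OF this]] show ?thesis using t by simp
  next
    case 7 then have "(a,c,b) \<in> Mset N fB" using mB box by auto
    from img[OF P1(2) UnI2[OF this]] show ?thesis using t by simp
  next
    case 8 then have "(c,a,b) \<in> Mset N fB" using mB box by auto
    from img[OF P1(4) UnI2[OF this]] show ?thesis using t by simp
  next
    case 9 then have "(a,b,c) \<in> Mset N fB" using mB box by auto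
    from img[OF P1(1) UnI2[OF this]] show ?thesis using t by simp
  next
    case 10 then have "(b,a,c) \<in> Mset N fB" using mB box by auto
    from img[OF P1(3) UnI2[OF this]] show ?thesis using t by simp
  qed
qed

lemma finite_Mset: "finite (Mset N f)"
proof -
  have "Mset N f \<subseteq> {1..N} \<times> {1..N} \<times> {1..N}" unfolding Mset_def by auto
  then show ?thesis by (rule finite_subset) auto
qed

lemma card_Mset: "real (card (Mset N f)) \<le> real N ^ 2 * (2 + ln (real N))"
proof -
  have "card (Mset N f) \<le> (\<Sum>z\<in>{1..N}. N * (N div z + 1))"
    unfolding Mset_def by (rule count_mod)
  then have "real (card (Mset N f)) \<le> real (\<Sum>z\<in>{1..N}. N * (N div z + 1))" by linarith
  also have "\<dots> \<le> real N ^ 2 * (2 + ln (real N))" by (rule sum_bound)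
  finally show ?thesis .
qed

lemma card_Ones: "card (Ones N) \<le> 3 * N ^ 2"
proof -
  have "card (Ones N) \<le> card ({1::nat} \<times> {1..N} \<times> {1..N}) + card ({1..N} \<times> {1::nat} \<times> {1..N}) + card ({1..N} \<times> {1..N} \<times> {1::nat})"
    unfolding Ones_def by (meson card_Un_le le_trans add_le_mono1)
  also have "\<dots> = 3 * N ^ 2" by (simp add: card_cartesian_product power2_eq_square)
  finally show ?thesis .
qed

lemma card_U: "real (card (Uset N)) \<le> real N ^ 2 * (27 + 12 * ln (real N))"
proof -
  have fin: "finite (Mset N fD \<union> Mset N fB)" using finite_Mset by auto
  have cM: "real (card (Mset N fD \<union> Mset N fB)) \<le> 2 * (real N ^ 2 * (2 + ln (real N)))"
  proof -
    have "card (Mset N fD \<union> Mset N fB) \<le> card (Mset N fD) + card (Mset N fB)" by (rule card_Un_le)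
    then have "real (card (Mset N fD \<union> Mset N fB)) \<le> real (card (Mset N fD)) + real (card (Mset N fB))" by linarith
    then show ?thesis using card_Mset[of N fD] card_Mset[of N fB] by linarith
  qed
  have fp: "finite perms" unfolding perms_def by simp
  have cp: "card perms \<le> 6" unfolding perms_def by (rule order_trans[OF card_insert_le_m1]) (auto intro!: card_insert_le_m1)
  have "card (\<Union>p\<in>perms. p ` (Mset N fD \<union> Mset N fB)) \<le> (\<Sum>p\<in>perms. card (p ` (Mset N fD \<union> Mset N fB)))"
    by (rule card_UN_le[OF fp])
  also have "\<dots> \<le> (\<Sum>p\<in>perms. card (Mset N fD \<union> Mset N fB))"
    by (intro sum_mono card_image_le fin)
  also have "\<dots> = card perms * card (Mset N fD \<union> Mset N fB)" by simp
  finally have "real (card (\<Union>p\<in>perms. p ` (Mset N fD \<union> Mset N fB))) \<le> real (card perms) * real (card (Mset N fD \<union> Mset N fB))"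
    by (metis of_nat_le_iff of_nat_mult)
  also have "\<dots> \<le> 6 * (2 * (real N ^ 2 * (2 + ln (real N))))"
    using cp cM by (intro mult_mono) auto
  finally have c2: "real (card (\<Union>p\<in>perms. p ` (Mset N fD \<union> Mset N fB))) \<le> 12 * (real N ^ 2 * (2 + ln (real N)))" by simp
  have "card (Uset N) \<le> card (Ones N) + card (\<Union>p\<in>perms. p ` (Mset N fD \<union> Mset N fB))"
    unfolding Uset_def by (rule card_Un_le)
  then have "real (card (Uset N)) \<le> real (card (Ones N)) + real (card (\<Union>p\<in>perms. p ` (Mset N fD \<union> Mset N fB)))" by linarith
  moreover have "real (card (Ones N)) \<le> 3 * real N ^ 2" using card_Ones[of N] by (metis of_nat_le_iff of_nat_mult of_nat_numeral of_nat_power)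
  ultimately show ?thesis using c2 by (simp add: algebra_simps)
qed

lemma finite_U: "finite (Uset N)"
  unfolding Uset_def Ones_def perms_def using finite_Mset by auto

theorem lemma4p11:
  shows "(\<lambda>N::nat. real (card (setS \<inter> ({1..N} \<times> {1..N} \<times> {1..N}))) / real N ^ 3)
           \<longlonglongrightarrow> 0"
proof (rule tendsto_sandwich[OF _ _ tendsto_const lim_final])
  show "\<forall>\<^sub>F N in sequentially. (0::real) \<le> real (card (setS \<inter> ({1..N} \<times> {1..N} \<times> {1..N}))) / real N ^ 3"
    by simp
  show "\<forall>\<^sub>F N in sequentially. real (card (setS \<inter> ({1..N} \<times> {1..N} \<times> {1..N}))) / real N ^ 3
          \<le> real N ^ 2 * (27 + 12 * ln (real N)) / real N ^ 3"
  proof (rule always_eventually, rule allI)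
    fix N :: nat
    have "setS \<inter> ({1..N} \<times> {1..N} \<times> {1..N}) \<subseteq> Uset N"
      using Q_U S_Q unfolding boxN_def by blast
    then have "card (setS \<inter> ({1..N} \<times> {1..N} \<times> {1..N})) \<le> card (Uset N)"
      by (rule card_mono[OF finite_U])
    then have "real (card (setS \<inter> ({1..N} \<times> {1..N} \<times> {1..N}))) \<le> real N ^ 2 * (27 + 12 * ln (real N))"
      using card_U[of N] by linarith
    then show "real (card (setS \<inter> ({1..N} \<times> {1..N} \<times> {1..N}))) / real N ^ 3
          \<le> real N ^ 2 * (27 + 12 * ln (real N)) / real N ^ 3"
      by (intro divide_right_mono) auto
  qed
qed

end
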